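(* Let $\xi\in\mathbb{D}=\{z\in\mathbb{C}:|z|<1\}$ with $\xi\neq 0$, and let $z\in\mathbb{D}\setminus\{\xi\}$. Put $b(z,\xi)=\dfrac{\bar\xi(\xi-z)}{1-z\bar\xi}$ and $A(z,\xi)=\dfrac{1-|\xi|^2}{1-z\bar\xi}$. Then $$|\arg b(z,\xi)|\le \pi\min\bigl\{|A(z,\xi)|,\,1\bigr\}.$$
   Context: Here $\arg w$ denotes the value of the argument of $w\neq 0$ lying in $[-\pi,\pi)$ (so it is the principal argument, except that on the negative real axis the value $-\pi$ is taken). *)

theory Defs
  imports "HOL-Analysis.Analysis"
begin

definition arg_m :: "complex \<Rightarrow> real" where
  "arg_m w = (if Arg w = pi then - pi else Arg w)"

definition bfun :: "complex \<Rightarrow> complex \<Rightarrow> complex" where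
  "bfun z \<xi> = cnj \<xi> * (\<xi> - z) / (1 - z * cnj \<xi>)"

definition Afun :: "complex \<Rightarrow> complex \<Rightarrow> complex" where
  "Afun z \<xi> = (1 - (norm \<xi>)\<^sup>2) / (1 - z * cnj \<xi>)"

end

theory Submission
  imports Defs
begin

lemma abs_arg_m: "\<bar>arg_m u\<bar> = \<bar>Arg u\<bar>"
  unfolding arg_m_def by auto

lemma abs_Arg_le: "\<bar>Arg u\<bar> \<le> pi"
  using mpi_less_Arg[of u] Arg_le_pi[of u] by auto

lemma key: "\<bar>Arg (1 - w)\<bar> \<le> pi * min (norm w) 1"
proof (cases "norm w < 1")
  case False
  then show ?thesis using abs_Arg_le[of "1-w"] by auto
next
  case True
  have rw: "\<bar>Re w\<bar> \<le> norm w" "\<bar>Im w\<bar> \<le> norm w" by (auto simp: abs_Re_le_cmod abs_Im_le_cmod)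
  have re: "Re (1 - w) > 0" using True rw by auto
  have A: "Arg (1 - w) = arctan (Im (1-w) / Re (1-w))" using arg_conv_arctan[OF re] .
  have lt: "\<bar>Arg (1 - w)\<bar> < pi/2" unfolding A abs_arctan using arctan_ubound by blast
  show ?thesis
  proof (cases "norm w < 1/2")
    case False
    have "pi * (1/2) \<le> pi * norm w" using False by (intro mult_left_mono) auto
    hence "\<bar>Arg (1 - w)\<bar> \<le> pi * norm w" using lt by linarith
    then show ?thesis using True by auto
  next
    case c: True
    have q: "\<bar>Im (1-w) / Re (1-w)\<bar> \<le> 2 * norm w"
    proof -
      have "\<bar>Im (1-w) / Re (1-w)\<bar> = \<bar>Im w\<bar> / (1 - Re w)" using re by (simp add: abs_divide)
      also have "\<dots> \<le> norm w / (1/2)"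
        by (rule frac_le) (use rw c in auto)
      finally show ?thesis by simp
    qed
    have "\<bar>Arg (1 - w)\<bar> \<le> 2 * norm w"
      unfolding A abs_arctan using arctan_le_self[of "\<bar>Im (1-w) / Re (1-w)\<bar>"] q by linarith
    also have "\<dots> \<le> pi * norm w" using pi_gt3 by (simp add: mult_right_mono)
    finally show ?thesis using True by auto
  qed
qed

theorem lemma1:
  fixes z \<xi> :: complex
  assumes "norm \<xi> < 1" and "\<xi> \<noteq> 0" and "norm z < 1" and "z \<noteq> \<xi>"
  shows "\<bar>arg_m (bfun z \<xi>)\<bar> \<le> pi * min (norm (Afun z \<xi>)) 1"
proof -
  have "norm (z * cnj \<xi>) < 1"
    using assms by (simp add: norm_mult) (metis mult_strict_mono' norm_ge_zero mult_1_right)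
  hence d: "1 - z * cnj \<xi> \<noteq> 0" by auto
  have n: "\<xi> * cnj \<xi> = (complex_of_real (norm \<xi>))\<^sup>2" using complex_norm_square[of \<xi>] by simp
  have "bfun z \<xi> = 1 - Afun z \<xi>"
    unfolding bfun_def Afun_def using d by (simp add: field_simps n)
  thus ?thesis using key[of "Afun z \<xi>"] abs_arg_m by simp
qed

end
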